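(* Let $G$ be a connected weighted multigraph on the vertex set $V$, $|V|=n\ge2$, with positive edge weights, weighted adjacency matrix $A$ and spectral radius $\rho$. Then the long walk distance $d^{LW}(i,j)=\lim_{\alpha\to\infty}d^{W}_\alpha(i,j)$ is a metric on $V$.
   Context: $A=(a_{ij})$ has $a_{ij}$ equal to the sum of weights of the edges joining $i$ and $j$ (loops, multiple edges allowed). For $\alpha>0$, $t=(\rho+\alpha^{-1})^{-1}$, $R_t=(I-tA)^{-1}=(r_{ij}(t))$, and $d^{W}_\alpha(i,j)=\theta\bigl(\tfrac12(\ln r_{ii}(t)+\ln r_{jj}(t))-\ln r_{ij}(t)\bigr)$ with $\theta=\ln(e+\alpha^{2/n})\frac{\alpha-1}{\ln\alpha}$ ($\theta=\ln(e+1)$ at $\alpha=1$); the limit defining $d^{LW}$ exists for all $i,j$. *)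

theory Defs
  imports Complex_Main "Jordan_Normal_Form.Spectral_Radius" "Jordan_Normal_Form.Gauss_Jordan_Elimination"
begin

text \<open>Vertices are 0,...,n-1; A is the n x n weighted adjacency matrix
  (a_ij = sum of weights of edges joining i and j, loops and multi-edges allowed).\<close>

definition weighted_adjacency :: "nat \<Rightarrow> real mat \<Rightarrow> bool" where
  "weighted_adjacency n A \<longleftrightarrow> A \<in> carrier_mat n n \<and>
     (\<forall>i<n. \<forall>j<n. A $$ (i,j) \<ge> 0 \<and> A $$ (i,j) = A $$ (j,i))"

definition connected_graph :: "nat \<Rightarrow> real mat \<Rightarrow> bool" where
  "connected_graph n A \<longleftrightarrow>
     (\<forall>i<n. \<forall>j<n. (i,j) \<in> {(k,l). k < n \<and> l < n \<and> A $$ (k,l) > 0}\<^sup>*)"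

definition spec_rad :: "real mat \<Rightarrow> real" where
  "spec_rad A = spectral_radius (map_mat complex_of_real A)"

definition walk_theta :: "nat \<Rightarrow> real \<Rightarrow> real" where
  "walk_theta n \<alpha> = (if \<alpha> = 1 then ln (exp 1 + 1)
      else ln (exp 1 + \<alpha> powr (2 / real n)) * (\<alpha> - 1) / ln \<alpha>)"

definition walk_resolvent :: "real mat \<Rightarrow> real \<Rightarrow> real mat" where
  "walk_resolvent A \<alpha> =
     (let n = dim_row A; t = inverse (spec_rad A + inverse \<alpha>)
      in the (mat_inverse (1\<^sub>m n - t \<cdot>\<^sub>m A)))"

definition walk_dist :: "real mat \<Rightarrow> real \<Rightarrow> nat \<Rightarrow> nat \<Rightarrow> real" where
  "walk_dist A \<alpha> i j =
     (let R = walk_resolvent A \<alpha>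
      in walk_theta (dim_row A) \<alpha> *
           ((ln (R $$ (i,i)) + ln (R $$ (j,j))) / 2 - ln (R $$ (i,j))))"

definition metric_on :: "nat set \<Rightarrow> (nat \<Rightarrow> nat \<Rightarrow> real) \<Rightarrow> bool" where
  "metric_on V d \<longleftrightarrow>
     (\<forall>i\<in>V. d i i = 0) \<and>
     (\<forall>i\<in>V. \<forall>j\<in>V. i \<noteq> j \<longrightarrow> d i j > 0) \<and>
     (\<forall>i\<in>V. \<forall>j\<in>V. d i j = d j i) \<and>
     (\<forall>i\<in>V. \<forall>j\<in>V. \<forall>k\<in>V. d i k \<le> d i j + d j k)"

end

theory Submission
  imports Defs "HOL-Analysis.Function_Topology"
begin


locale wg = fixes n :: nat and A :: "real mat"
  assumes n2: "n \<ge> 2" and wa: "weighted_adjacency n A" and cg: "connected_graph n A"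
begin

abbreviation a where "a i j \<equiv> A $$ (i,j)"

lemma A_carrier: "A \<in> carrier_mat n n" using wa unfolding weighted_adjacency_def by auto
lemma a_nonneg: "i < n \<Longrightarrow> j < n \<Longrightarrow> a i j \<ge> 0" using wa unfolding weighted_adjacency_def by auto
lemma a_sym: "i < n \<Longrightarrow> j < n \<Longrightarrow> a i j = a j i" using wa unfolding weighted_adjacency_def by auto

definition Q :: "(nat \<Rightarrow> real) \<Rightarrow> real" where "Q x = (\<Sum>i<n. \<Sum>j<n. a i j * x i * x j)"
definition Bq :: "(nat \<Rightarrow> real) \<Rightarrow> (nat \<Rightarrow> real) \<Rightarrow> real" where "Bq x y = (\<Sum>i<n. \<Sum>j<n. a i j * x i * y j)"
definition S where "S = {x::nat\<Rightarrow>real. (\<forall>i. i \<ge> n \<longrightarrow> x i = 0) \<and> (\<Sum>i<n. (x i)^2) = 1}"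

lemma coord: "continuous_on T (\<lambda>x::nat\<Rightarrow>real. x i)"
  by (rule continuous_on_subset[OF continuous_on_product_coordinates]) auto

lemma compact_S: "compact S"
proof -
  define K where "K = PiE UNIV (\<lambda>i. if i < n then {-1..1} else {0::real})"
  have "compactin (product_topology (\<lambda>i. euclidean) UNIV) K"
    unfolding K_def compactin_PiE by (auto simp: compactin_euclidean_iff)
  hence cK: "compact K" by (simp add: euclidean_product_topology compactin_euclidean_iff)
  have cl: "closed {x::nat\<Rightarrow>real. (\<Sum>i<n. (x i)^2) = 1}"
    by (rule closed_Collect_eq) (intro continuous_intros coord)+
  have "S = K \<inter> {x::nat\<Rightarrow>real. (\<Sum>i<n. (x i)^2) = 1}"
  proof (intro equalityI subsetI)
    fix x assume x: "x \<in> S"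
    have "\<bar>x i\<bar> \<le> 1" if "i < n" for i
    proof -
      have "(x i)^2 \<le> (\<Sum>i<n. (x i)^2)"
        using that by (intro member_le_sum) auto
      hence "(x i)^2 \<le> 1" using x unfolding S_def by auto
      thus ?thesis by (simp add: abs_square_le_1)
    qed
    thus "x \<in> K \<inter> {x::nat\<Rightarrow>real. (\<Sum>i<n. (x i)^2) = 1}"
      using x unfolding S_def K_def by (auto simp: PiE_iff abs_le_iff)
  next
    fix x assume "x \<in> K \<inter> {x::nat\<Rightarrow>real. (\<Sum>i<n. (x i)^2) = 1}"
    thus "x \<in> S" unfolding S_def K_def by (auto simp: PiE_iff) (metis not_le singletonD)
  qed
  thus ?thesis using compact_Int_closed[OF cK cl] by simp
qed

lemma S_ne: "S \<noteq> {}"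
proof -
  have "(\<Sum>i<n. ((if i = 0 then 1 else 0::real))^2) = (\<Sum>i<n. if i = 0 then 1 else 0)"
    by (intro sum.cong) auto
  also have "\<dots> = 1" using n2 by (simp add: sum.delta)
  finally have "(\<lambda>i. if i = 0 then 1 else 0::real) \<in> S" using n2 unfolding S_def by auto
  thus ?thesis by blast
qed

lemma Q_cont: "continuous_on T Q"
  unfolding Q_def by (intro continuous_intros coord)

definition u0 where "u0 = (SOME x. x \<in> S \<and> (\<forall>y\<in>S. Q y \<le> Q x))"
lemma u0: "u0 \<in> S" "\<And>y. y \<in> S \<Longrightarrow> Q y \<le> Q u0"
proof -
  have "\<exists>x\<in>S. \<forall>y\<in>S. Q y \<le> Q x"
    by (rule continuous_attains_sup[OF compact_S S_ne Q_cont])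
  hence "u0 \<in> S \<and> (\<forall>y\<in>S. Q y \<le> Q u0)" unfolding u0_def by (rule someI_ex[where P="\<lambda>x. x \<in> S \<and> (\<forall>y\<in>S. Q y \<le> Q x)", OF bexE]) blast+
  thus "u0 \<in> S" "\<And>y. y \<in> S \<Longrightarrow> Q y \<le> Q u0" by auto
qed

definition u where "u i = \<bar>u0 i\<bar>"
definition mu where "mu = Q u"

lemma u_S: "u \<in> S" using u0(1) unfolding S_def u_def by auto
lemma u_nonneg: "u i \<ge> 0" unfolding u_def by auto
lemma u_norm: "(\<Sum>i<n. (u i)^2) = 1" using u_S unfolding S_def by auto

lemma Q_abs: "Q x \<le> Q (\<lambda>i. \<bar>x i\<bar>)"
  unfolding Q_def
proof (intro sum_mono)
  fix i j assume "i \<in> {..<n}" "j \<in> {..<n}"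
  hence "a i j \<ge> 0" using a_nonneg by auto
  hence "a i j * (x i * x j) \<le> a i j * (\<bar>x i\<bar> * \<bar>x j\<bar>)"
    by (intro mult_left_mono) (auto simp: abs_mult[symmetric])
  thus "a i j * x i * x j \<le> a i j * \<bar>x i\<bar> * \<bar>x j\<bar>" by (simp add: mult.assoc)
qed

lemma mu_max: "y \<in> S \<Longrightarrow> Q y \<le> mu"
proof -
  assume "y \<in> S"
  hence "Q y \<le> Q u0" by (rule u0(2))
  also have "\<dots> \<le> Q u" using Q_abs[of u0] unfolding u_def by simp
  finally show ?thesis unfolding mu_def .
qed

lemma Q_scale: "Q (\<lambda>i. c * x i) = c^2 * Q x"
  unfolding Q_def by (simp add: sum_distrib_left power2_eq_square algebra_simps)

lemma Q_restrict: "Q (\<lambda>i. if i < n then x i else 0) = Q x"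
  unfolding Q_def by (intro sum.cong) auto

lemma rayleigh: "Q x \<le> mu * (\<Sum>i<n. (x i)^2)"
proof -
  define s where "s = (\<Sum>i<n. (x i)^2)"
  show ?thesis
  proof (cases "s = 0")
    case True
    hence "\<forall>i\<in>{..<n}. (x i)^2 = 0" unfolding s_def by (subst sum_nonneg_eq_0_iff[symmetric]) auto
    hence "Q x = 0" unfolding Q_def by (intro sum.neutral) auto
    thus ?thesis using True s_def by simp
  next
    case False
    hence sp: "s > 0" unfolding s_def by (metis sum_nonneg zero_le_power2 less_eq_real_def)
    define y where "y i = (if i < n then x i / sqrt s else 0)" for i
    have "(\<Sum>i<n. (y i)^2) = (\<Sum>i<n. (x i)^2 / s)"
      unfolding y_def using sp by (intro sum.cong) (auto simp: power_divide)
    also have "\<dots> = 1" using sp unfolding s_def[symmetric] sum_divide_distrib[symmetric] by simp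
    finally have "y \<in> S" unfolding S_def y_def by auto
    hence "Q y \<le> mu" by (rule mu_max)
    moreover have "Q y = Q x / s"
    proof -
      have "y = (\<lambda>i. if i < n then (1 / sqrt s * x i) else 0)" unfolding y_def by auto
      hence "Q y = Q (\<lambda>i. 1/sqrt s * x i)" using Q_restrict[of "\<lambda>i. 1/sqrt s * x i"] by simp
      also have "\<dots> = (1/sqrt s)^2 * Q x" by (rule Q_scale)
      also have "\<dots> = Q x / s" using sp by (simp add: power_divide)
      finally show ?thesis .
    qed
    ultimately show ?thesis using sp unfolding s_def[symmetric] by (simp add: field_simps)
  qed
qed


definition E where "E = {(k,l). k < n \<and> l < n \<and> a k l > 0}"
lemma conn: "i < n \<Longrightarrow> j < n \<Longrightarrow> (i,j) \<in> E\<^sup>*"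
  using cg unfolding connected_graph_def E_def by auto

lemma Bq_sym: "Bq y x = Bq x y"
proof -
  have "Bq y x = (\<Sum>j<n. \<Sum>i<n. a i j * y i * x j)" unfolding Bq_def by (rule sum.swap)
  also have "\<dots> = Bq x y" unfolding Bq_def
    by (intro sum.cong refl) (simp add: a_sym)
  finally show ?thesis .
qed

definition F where "F x = mu * (\<Sum>i<n. (x i)^2) - Q x"
definition Mv where "Mv x i = mu * x i - (\<Sum>j<n. a i j * x j)"

lemma F_nonneg: "F x \<ge> 0" using rayleigh[of x] unfolding F_def by simp

lemma Q_expand: "Q (\<lambda>i. x i - e * y i) = Q x - 2*e*Bq x y + e^2 * Q y"
proof -
  have "Q (\<lambda>i. x i - e * y i) = Q x - e * Bq x y - e * Bq y x + e^2 * Q y"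
    unfolding Q_def Bq_def
    by (simp add: algebra_simps sum.distrib sum_subtractf sum_distrib_left power2_eq_square)
  thus ?thesis using Bq_sym[of x y] by simp
qed

lemma Bq_Mv: "mu * (\<Sum>i<n. x i * w i) - Bq x w = (\<Sum>i<n. w i * Mv x i)"
proof -
  have "Bq x w = Bq w x" by (rule Bq_sym)
  also have "\<dots> = (\<Sum>i<n. w i * (\<Sum>j<n. a i j * x j))"
    unfolding Bq_def by (simp add: sum_distrib_left algebra_simps)
  finally show ?thesis unfolding Mv_def
    by (simp add: algebra_simps sum_subtractf sum_distrib_left)
qed

lemma F_expand: "F (\<lambda>i. x i - e * w i) = F x - 2*e*(\<Sum>i<n. w i * Mv x i) + e^2 * F w"
proof -
  have "(\<Sum>i<n. (x i - e * w i)^2) = (\<Sum>i<n. (x i)^2) - 2*e*(\<Sum>i<n. x i * w i) + e^2 * (\<Sum>i<n. (w i)^2)"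
    by (simp add: algebra_simps sum.distrib sum_subtractf sum_distrib_left power2_eq_square)
  note h = this
  show ?thesis unfolding F_def Q_expand h Bq_Mv[symmetric] by (simp add: algebra_simps)
qed

lemma psd_kernel: assumes "F x = 0" "i < n" shows "Mv x i = 0"
proof -
  define w where "w = Mv x"
  define W where "W = (\<Sum>i<n. w i * Mv x i)"
  have W: "W = (\<Sum>i<n. (w i)^2)" unfolding W_def w_def by (simp add: power2_eq_square)
  have W0: "W \<ge> 0" unfolding W by (intro sum_nonneg) auto
  have "W = 0"
  proof (rule ccontr)
    assume "W \<noteq> 0" hence Wp: "W > 0" using W0 by simp
    define e where "e = W / (F w + 1)"
    have Fw: "F w \<ge> 0" by (rule F_nonneg)
    have ep: "e > 0" unfolding e_def using Wp Fw by simp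
    have "e * F w < W" unfolding e_def using Wp Fw by (simp add: field_simps)
    hence lt: "e * (e * F w) < e * W" using ep by simp
    have eq: "F (\<lambda>i. x i - e * w i) = - 2*e*W + e*(e*F w)"
      unfolding F_expand assms(1) W_def by (simp add: power2_eq_square)
    have "e*W > 0" using ep Wp by simp
    hence "F (\<lambda>i. x i - e * w i) < 0" using eq lt by linarith
    thus False using F_nonneg[of "\<lambda>i. x i - e * w i"] by simp
  qed
  hence "\<forall>i\<in>{..<n}. (w i)^2 = 0" unfolding W by (subst sum_nonneg_eq_0_iff[symmetric]) auto
  thus ?thesis using assms(2) unfolding w_def by simp
qed

lemma F_u: "F u = 0" unfolding F_def mu_def u_norm by simp

lemma Au: "i < n \<Longrightarrow> (\<Sum>j<n. a i j * u j) = mu * u i"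
  using psd_kernel[OF F_u, of i] unfolding Mv_def by simp

lemma uA: "j < n \<Longrightarrow> (\<Sum>i<n. u i * a i j) = mu * u j"
  using Au[of j] by (simp add: a_sym mult.commute)

lemma mu_pos: "mu > 0"
proof -
  have "(0,1) \<in> E\<^sup>*" using n2 by (intro conn) auto
  then obtain k l where kl: "(k,l) \<in> E"
    by (metis converse_rtranclE zero_neq_one)
  hence kl': "k < n" "l < n" "a k l > 0" unfolding E_def by auto
  define x where "x i = (if i = k \<or> i = l then 1 else 0::real)" for i
  have xn: "x i \<ge> 0" for i unfolding x_def by auto
  have "a k l * x k * x l \<le> (\<Sum>j<n. a k j * x k * x j)"
    using kl' a_nonneg xn by (intro member_le_sum) auto
  also have "\<dots> \<le> Q x" unfolding Q_def
    using kl' a_nonneg xn by (intro member_le_sum sum_nonneg) auto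
  finally have "Q x > 0" using kl' unfolding x_def by auto
  hence "mu * (\<Sum>i<n. (x i)^2) > 0" using rayleigh[of x] by simp
  moreover have "(\<Sum>i<n. (x i)^2) \<ge> 0" by (intro sum_nonneg) auto
  ultimately show ?thesis by (metis mult_nonpos_nonneg not_less not_le)
qed

lemma zero_prop: assumes "\<And>i. i < n \<Longrightarrow> y i \<ge> 0"
    "\<And>i. i < n \<Longrightarrow> (\<Sum>j<n. a i j * y j) = mu * y i" "k < n" "y k = 0" "l < n"
  shows "y l = 0"
proof -
  have "(k,l) \<in> E\<^sup>*" using assms by (intro conn) auto
  thus ?thesis
  proof (induction rule: rtrancl_induct)
    case base thus ?case using assms by simp
  next
    case (step m p)
    hence mp: "m < n" "p < n" "a m p > 0" unfolding E_def by auto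
    have "(\<Sum>j<n. a m j * y j) = 0" using assms(2)[OF mp(1)] step by simp
    hence "\<forall>j\<in>{..<n}. a m j * y j = 0"
      using assms(1) a_nonneg mp by (subst sum_nonneg_eq_0_iff[symmetric]) auto
    hence "a m p = 0 \<or> y p = 0" using mp(2) by simp
    thus ?case using mp(3) by auto
  qed
qed

lemma u_pos: "i < n \<Longrightarrow> u i > 0"
proof (rule ccontr)
  assume i: "i < n" "\<not> u i > 0"
  hence "u i = 0" using u_nonneg[of i] by simp
  hence "\<forall>l<n. u l = 0" using zero_prop[of u i] i u_nonneg Au by blast
  thus False using u_norm by simp
qed

end

context wg begin

lemma mv_index: "M \<in> carrier_mat n n \<Longrightarrow> v \<in> carrier_vec n \<Longrightarrow> i < n \<Longrightarrow>
  (M *\<^sub>v v) $ i = (\<Sum>j<n. M $$ (i,j) * v $ j)"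
proof -
  assume M: "M \<in> carrier_mat n n" and v: "v \<in> carrier_vec n" and i: "i < n"
  have "(M *\<^sub>v v) $ i = row M i \<bullet> v" using M i by simp
  also have "\<dots> = (\<Sum>j\<in>{0..<n}. row M i $ j * v $ j)" unfolding scalar_prod_def using v by simp
  also have "\<dots> = (\<Sum>j<n. M $$ (i,j) * v $ j)" unfolding atLeast0LessThan
    using M i by (intro sum.cong refl) auto
  finally show ?thesis .
qed

abbreviation CA where "CA \<equiv> map_mat complex_of_real A"
lemma CA_carrier: "CA \<in> carrier_mat n n" using A_carrier by simp

lemma mu_eig: "eigenvalue CA (complex_of_real mu)"
proof -
  define v where "v = vec n (\<lambda>i. complex_of_real (u i))"
  have "v \<noteq> 0\<^sub>v n"
  proof
    assume "v = 0\<^sub>v n"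
    hence "v $ 0 = 0" using n2 by simp
    thus False using u_pos[of 0] n2 unfolding v_def by simp
  qed
  moreover have "CA *\<^sub>v v = complex_of_real mu \<cdot>\<^sub>v v"
  proof (rule eq_vecI)
    fix i assume "i < dim_vec (complex_of_real mu \<cdot>\<^sub>v v)"
    hence i: "i < n" unfolding v_def by simp
    have "(CA *\<^sub>v v) $ i = (\<Sum>j<n. complex_of_real (a i j) * complex_of_real (u j))"
      using i A_carrier mv_index[OF CA_carrier, of v i] unfolding v_def by simp
    also have "\<dots> = complex_of_real (\<Sum>j<n. a i j * u j)" by simp
    also have "\<dots> = complex_of_real (mu * u i)" using Au[OF i] by simp
    finally show "(CA *\<^sub>v v) $ i = (complex_of_real mu \<cdot>\<^sub>v v) $ i" using i unfolding v_def by simp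
  qed (use A_carrier in \<open>simp add: v_def\<close>)
  ultimately show ?thesis unfolding eigenvalue_def eigenvector_def using A_carrier
    by (intro exI[of _ v]) (auto simp: v_def)
qed

lemma eig_bound: assumes "eigenvalue CA k" shows "cmod k \<le> mu"
proof -
  from assms obtain v where v: "v \<in> carrier_vec n" "v \<noteq> 0\<^sub>v n" "CA *\<^sub>v v = k \<cdot>\<^sub>v v"
    unfolding eigenvalue_def eigenvector_def using A_carrier by auto
  have ineq: "cmod k * cmod (v $ i) \<le> (\<Sum>j<n. a i j * cmod (v $ j))" if i: "i < n" for i
  proof -
    have "k * v $ i = (CA *\<^sub>v v) $ i" using v(3) v(1) i by simp
    also have "\<dots> = (\<Sum>j<n. complex_of_real (a i j) * v $ j)"
      using i v(1) A_carrier mv_index[OF CA_carrier, of v i] by simp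
    finally have "cmod (k * v $ i) = cmod (\<Sum>j<n. complex_of_real (a i j) * v $ j)" by simp
    also have "\<dots> \<le> (\<Sum>j<n. cmod (complex_of_real (a i j) * v $ j))" by (rule norm_sum)
    also have "\<dots> = (\<Sum>j<n. a i j * cmod (v $ j))"
      using a_nonneg i by (intro sum.cong refl) (simp add: norm_mult)
    finally show ?thesis by (simp add: norm_mult)
  qed
  define T where "T = (\<Sum>i<n. u i * cmod (v $ i))"
  have "cmod k * T = (\<Sum>i<n. u i * (cmod k * cmod (v $ i)))"
    unfolding T_def by (simp add: sum_distrib_left algebra_simps)
  also have "\<dots> \<le> (\<Sum>i<n. u i * (\<Sum>j<n. a i j * cmod (v $ j)))"
    using ineq u_nonneg by (intro sum_mono mult_left_mono) auto
  also have "\<dots> = (\<Sum>j<n. (\<Sum>i<n. u i * a i j) * cmod (v $ j))"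
  proof -
    have "(\<Sum>i<n. u i * (\<Sum>j<n. a i j * cmod (v $ j))) = (\<Sum>i<n. \<Sum>j<n. u i * a i j * cmod (v $ j))"
      by (simp add: sum_distrib_left mult.assoc)
    also have "\<dots> = (\<Sum>j<n. \<Sum>i<n. u i * a i j * cmod (v $ j))" by (rule sum.swap)
    also have "\<dots> = (\<Sum>j<n. (\<Sum>i<n. u i * a i j) * cmod (v $ j))" by (simp add: sum_distrib_right)
    finally show ?thesis .
  qed
  also have "\<dots> = (\<Sum>j<n. mu * u j * cmod (v $ j))" by (intro sum.cong refl) (simp add: uA)
  also have "\<dots> = mu * T" unfolding T_def by (simp add: sum_distrib_left algebra_simps)
  finally have le: "cmod k * T \<le> mu * T" .
  obtain i where i: "i < n" "v $ i \<noteq> 0" using v(1,2) by (metis carrier_vecD eq_vecI index_zero_vec(1,2))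
  have "u i * cmod (v $ i) \<le> T" unfolding T_def
    using i u_nonneg by (intro member_le_sum) auto
  moreover have "u i * cmod (v $ i) > 0" using u_pos[OF i(1)] i(2) by simp
  ultimately have "T > 0" by linarith
  thus ?thesis using le by simp
qed

lemma spec_rad_mu: "spec_rad A = mu"
proof -
  have n0: "n > 0" using n2 by simp
  have "spectral_radius CA \<in> norm ` spectrum CA" by (rule spectral_radius_mem_max(1)[OF CA_carrier n0])
  then obtain k where "eigenvalue CA k" "spectral_radius CA = cmod k" unfolding spectrum_def by auto
  hence le: "spectral_radius CA \<le> mu" using eig_bound by simp
  have "mu \<in> norm ` spectrum CA" using mu_eig mu_pos
    by (intro image_eqI[where x="complex_of_real mu"]) (auto simp: spectrum_def)
  hence "mu \<le> spectral_radius CA" by (rule spectral_radius_mem_max(2)[OF CA_carrier n0])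
  thus ?thesis using le unfolding spec_rad_def by simp
qed

end


lemma det_tendsto:
  fixes M :: "'b \<Rightarrow> real mat"
  assumes "\<And>x. M x \<in> carrier_mat m m" "M0 \<in> carrier_mat m m"
    "\<And>i j. i < m \<Longrightarrow> j < m \<Longrightarrow> ((\<lambda>x. M x $$ (i,j)) \<longlongrightarrow> M0 $$ (i,j)) F"
  shows "((\<lambda>x. det (M x)) \<longlongrightarrow> det M0) F"
proof -
  have "((\<lambda>x. \<Sum> p\<in>{p. p permutes {0..<m}}. signof p * (\<Prod> i=0..<m. M x $$ (i, p i))) \<longlongrightarrow>
      (\<Sum> p\<in>{p. p permutes {0..<m}}. signof p * (\<Prod> i=0..<m. M0 $$ (i, p i)))) F"
  proof (intro tendsto_sum tendsto_mult tendsto_const tendsto_prod)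
    fix p i assume "p \<in> {p. p permutes {0..<m}}" "i \<in> {0..<m}"
    hence "i < m" "p i < m" using permutes_in_image by fastforce+
    thus "((\<lambda>x. M x $$ (i, p i)) \<longlongrightarrow> M0 $$ (i, p i)) F" by (rule assms(3))
  qed
  thus ?thesis unfolding det_def'[OF assms(1)] det_def'[OF assms(2)] .
qed

lemma cofactor_tendsto:
  fixes M :: "'b \<Rightarrow> real mat"
  assumes "\<And>x. M x \<in> carrier_mat m m" "M0 \<in> carrier_mat m m"
    "\<And>i j. i < m \<Longrightarrow> j < m \<Longrightarrow> ((\<lambda>x. M x $$ (i,j)) \<longlongrightarrow> M0 $$ (i,j)) F"
    and ij: "i < m" "j < m"
  shows "((\<lambda>x. cofactor (M x) i j) \<longlongrightarrow> cofactor M0 i j) F"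
  unfolding cofactor_def
proof (intro tendsto_mult_left det_tendsto)
  show "\<And>x. mat_delete (M x) i j \<in> carrier_mat (m-1) (m-1)" using assms(1) by (rule mat_delete_carrier)
  show "mat_delete M0 i j \<in> carrier_mat (m-1) (m-1)" using assms(2) by (rule mat_delete_carrier)
  fix k l assume kl: "k < m - 1" "l < m - 1"
  have "((\<lambda>x. M x $$ (if k < i then k else Suc k, if l < j then l else Suc l)) \<longlongrightarrow>
         M0 $$ (if k < i then k else Suc k, if l < j then l else Suc l)) F"
    using kl by (intro assms(3)) auto
  thus "((\<lambda>x. mat_delete (M x) i j $$ (k, l)) \<longlongrightarrow> mat_delete M0 i j $$ (k, l)) F"
    using kl carrier_matD[OF assms(1)] carrier_matD[OF assms(2)] unfolding mat_delete_def by simp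
qed

lemma mm_index: "M \<in> carrier_mat n n \<Longrightarrow> N \<in> carrier_mat n n \<Longrightarrow> i < n \<Longrightarrow> j < n \<Longrightarrow>
  (M * N) $$ (i,j) = (\<Sum>k<n. M $$ (i,k) * N $$ (k,j))"
proof -
  assume M: "M \<in> carrier_mat n n" and N: "N \<in> carrier_mat n n" and i: "i < n" and j: "j < n"
  have "(M * N) $$ (i,j) = row M i \<bullet> col N j" using M N i j by simp
  also have "\<dots> = (\<Sum>k\<in>{0..<n}. row M i $ k * col N j $ k)" unfolding scalar_prod_def using N by simp
  also have "\<dots> = (\<Sum>k<n. M $$ (i,k) * N $$ (k,j))" unfolding atLeast0LessThan
    using M N i j by (intro sum.cong refl) auto
  finally show ?thesis .
qed

context wg begin

definition Nt where "Nt t = mat n n (\<lambda>(i,j). (if i = j then 1 else 0) - t * (a i j - mu * u i * u j))"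
definition Xt where "Xt t = (1 / det (Nt t)) \<cdot>\<^sub>m adj_mat (Nt t)"
definition t0 where "t0 = 1 / mu"

lemma Nt_carrier: "Nt t \<in> carrier_mat n n" unfolding Nt_def by simp
lemma Nt_index: "i < n \<Longrightarrow> j < n \<Longrightarrow> Nt t $$ (i,j) = (if i = j then 1 else 0) - t * (a i j - mu * u i * u j)"
  unfolding Nt_def by simp
lemma Xt_carrier: "Xt t \<in> carrier_mat n n" unfolding Xt_def using adj_mat(1)[OF Nt_carrier] by simp

lemma smult_one_inv: "c \<noteq> 0 \<Longrightarrow> (1/c) \<cdot>\<^sub>m (c \<cdot>\<^sub>m 1\<^sub>m n) = (1\<^sub>m n :: real mat)"
  by (rule eq_matI) auto

lemma delta_sum: "i < n \<Longrightarrow> (\<Sum>k<n. (if i = k then 1 else 0) * (x k::real)) = x i"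
proof -
  assume i: "i < n"
  have "(\<Sum>k<n. (if i = k then 1 else 0) * x k) = (\<Sum>k<n. if i = k then x k else 0)" by (intro sum.cong) auto
  thus ?thesis using i by simp
qed

lemma Xt_inv: assumes "det (Nt t) \<noteq> 0" shows "Nt t * Xt t = 1\<^sub>m n" "Xt t * Nt t = 1\<^sub>m n"
proof -
  note adj = adj_mat[OF Nt_carrier, of t]
  show "Nt t * Xt t = 1\<^sub>m n" unfolding Xt_def
    using mult_smult_distrib[OF Nt_carrier adj(1)] adj(2) assms smult_one_inv by simp
  show "Xt t * Nt t = 1\<^sub>m n" unfolding Xt_def
    using mult_smult_assoc_mat[OF adj(1) Nt_carrier] adj(3) assms smult_one_inv by simp
qed

lemma NX: assumes "det (Nt t) \<noteq> 0" "i < n" "j < n"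
  shows "(\<Sum>k<n. Nt t $$ (i,k) * Xt t $$ (k,j)) = (if i = j then 1 else 0)"
    "(\<Sum>k<n. Xt t $$ (i,k) * Nt t $$ (k,j)) = (if i = j then 1 else 0)"
  using mm_index[OF Nt_carrier Xt_carrier assms(2,3), of t t] mm_index[OF Xt_carrier Nt_carrier assms(2,3), of t t]
    Xt_inv[OF assms(1)] assms(2,3) by simp_all

lemma det_N0: "det (Nt t0) \<noteq> 0"
proof
  assume "det (Nt t0) = 0"
  then obtain v where v: "v \<in> carrier_vec n" "v \<noteq> 0\<^sub>v n" "Nt t0 *\<^sub>v v = 0\<^sub>v n"
    using det_0_iff_vec_prod_zero[OF Nt_carrier] by auto
  define x where "x i = v $ i" for i
  define c where "c = (\<Sum>k<n. u k * x k)"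
  have eq: "x i - t0 * (\<Sum>k<n. a i k * x k) + u i * c = 0" if i: "i < n" for i
  proof -
    have "(\<Sum>k<n. Nt t0 $$ (i,k) * x k) = 0" using v(1,3) i mv_index[OF Nt_carrier v(1) i, of t0]
      unfolding x_def by simp
    also have "(\<Sum>k<n. Nt t0 $$ (i,k) * x k) = (\<Sum>k<n. (if i = k then 1 else 0) * x k - t0 * (a i k * x k) + u i * (u k * x k))"
      using mu_pos by (intro sum.cong refl) (simp add: Nt_index i t0_def algebra_simps)
    also have "\<dots> = x i - t0 * (\<Sum>k<n. a i k * x k) + u i * c"
      unfolding c_def using i by (simp add: sum.distrib sum_subtractf sum_distrib_left delta_sum)
    finally show ?thesis by simp
  qed
  define B where "B i = (\<Sum>k<n. a i k * x k)" for i
  have "(\<Sum>i<n. u i * (x i - t0 * B i + u i * c)) = 0"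
    using eq unfolding B_def by simp
  moreover have "(\<Sum>i<n. u i * B i) = mu * c"
  proof -
    have "(\<Sum>i<n. u i * (\<Sum>k<n. a i k * x k)) = (\<Sum>i<n. \<Sum>k<n. u i * a i k * x k)"
      by (simp add: sum_distrib_left mult.assoc)
    also have "\<dots> = (\<Sum>k<n. \<Sum>i<n. u i * a i k * x k)" by (rule sum.swap)
    also have "\<dots> = (\<Sum>k<n. (\<Sum>i<n. u i * a i k) * x k)" by (simp add: sum_distrib_right)
    also have "\<dots> = (\<Sum>k<n. mu * (u k * x k))" by (intro sum.cong refl) (simp add: uA)
    finally show ?thesis unfolding c_def B_def by (simp add: sum_distrib_left)
  qed
  moreover have "(\<Sum>i<n. u i * (x i - t0 * B i + u i * c)) = (\<Sum>i<n. u i * x i) - t0 * (\<Sum>i<n. u i * B i) + c * (\<Sum>i<n. (u i)^2)"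
    by (simp add: sum.distrib sum_subtractf sum_distrib_left algebra_simps power2_eq_square)
  moreover have "(\<Sum>i<n. u i * x i) = c" unfolding c_def ..
  ultimately have "c - t0 * (mu * c) + c * (\<Sum>i<n. (u i)^2) = 0" by simp
  hence c0: "c = 0" using mu_pos u_norm unfolding t0_def by simp
  have ker: "(\<Sum>k<n. a i k * x k) = mu * x i" if "i < n" for i
    using eq[OF that] c0 mu_pos unfolding t0_def by (simp add: field_simps)
  define m where "m = Max ((\<lambda>i. x i / u i) ` {..<n})"
  have fin: "finite ((\<lambda>i. x i / u i) ` {..<n})" "((\<lambda>i. x i / u i) ` {..<n}) \<noteq> {}"
    using n2 by (auto simp: lessThan_empty_iff)
  obtain k where k: "k < n" "m = x k / u k" using Max_in[OF fin] unfolding m_def by auto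
  have mge: "x i / u i \<le> m" if "i < n" for i unfolding m_def using fin that by (intro Max_ge) auto
  define y where "y i = m * u i - x i" for i
  have ynn: "y i \<ge> 0" if "i < n" for i
    using mge[OF that] u_pos[OF that] unfolding y_def by (simp add: field_simps)
  have yA: "(\<Sum>j<n. a i j * y j) = mu * y i" if "i < n" for i
  proof -
    have "(\<Sum>j<n. a i j * y j) = m * (\<Sum>j<n. a i j * u j) - (\<Sum>j<n. a i j * x j)"
      unfolding y_def by (simp add: algebra_simps sum_subtractf sum_distrib_left)
    thus ?thesis using Au[OF that] ker[OF that] unfolding y_def by (simp add: algebra_simps)
  qed
  have yk: "y k = 0" using k u_pos[OF k(1)] unfolding y_def by simp
  have y0: "y i = 0" if "i < n" for i by (rule zero_prop[of y k i]) (use ynn yA k yk that in auto)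
  have xm: "x i = m * u i" if "i < n" for i using y0[OF that] unfolding y_def by simp
  have "c = (\<Sum>i<n. m * (u i)^2)" unfolding c_def
    by (intro sum.cong refl) (simp add: xm power2_eq_square)
  hence "c = m * (\<Sum>i<n. (u i)^2)" by (simp add: sum_distrib_left)
  hence "m = 0" using c0 u_norm by simp
  hence "x i = 0" if "i < n" for i using y0[OF that] unfolding y_def by simp
  hence "v = 0\<^sub>v n" using v(1) unfolding x_def by (intro eq_vecI) auto
  thus False using v(2) by simp
qed

end


lemma hs_zero: assumes "(h \<longlongrightarrow> (c::real)) at_top" "filterlim s at_top at_top"
  shows "((\<lambda>x. h x / s x) \<longlongrightarrow> 0) at_top"
proof -
  have "((\<lambda>x. h x * inverse (s x)) \<longlongrightarrow> c * 0) at_top"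
    by (intro tendsto_mult assms(1) tendsto_inverse_0_at_top assms(2))
  thus ?thesis by (simp add: divide_inverse)
qed

lemma ln_lim: assumes h: "(h \<longlongrightarrow> (c::real)) at_top" and s: "filterlim s at_top at_top"
  shows "((\<lambda>x. s x * ln (1 + h x / s x)) \<longlongrightarrow> c) at_top"
proof -
  have f0: "((\<lambda>x. (h x)^2 * inverse (s x)) \<longlongrightarrow> c^2 * 0) at_top"
    by (intro tendsto_mult tendsto_power h tendsto_inverse_0_at_top s)
  have ev1: "\<forall>\<^sub>F x in at_top. s x > 0" using s by (simp add: filterlim_at_top_dense)
  have ev2: "\<forall>\<^sub>F x in at_top. dist (h x / s x) 0 < 1/2"
    using tendstoD[OF hs_zero[OF h s], of "1/2"] by simp
  have "\<forall>\<^sub>F x in at_top. norm (s x * ln (1 + h x / s x) - h x) \<le> norm ((h x)^2 * inverse (s x)) * 2"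
    using ev1 ev2
  proof eventually_elim
    case (elim x)
    let ?y = "h x / s x"
    have "\<bar>ln (1 + ?y) - ?y\<bar> \<le> 2 * ?y^2"
      using elim by (intro abs_ln_one_plus_x_minus_x_bound) auto
    hence "s x * \<bar>ln (1 + ?y) - ?y\<bar> \<le> s x * (2 * ?y^2)" using elim by (intro mult_left_mono) auto
    moreover have "s x * \<bar>ln (1 + ?y) - ?y\<bar> = \<bar>s x * ln (1 + ?y) - h x\<bar>"
    proof -
      have e1: "s x * ?y = h x" using elim by simp
      have "s x * \<bar>ln (1 + ?y) - ?y\<bar> = \<bar>s x * (ln (1 + ?y) - ?y)\<bar>" using elim by (simp add: abs_mult)
      also have "\<dots> = \<bar>s x * ln (1 + ?y) - h x\<bar>" using e1 by (simp add: right_diff_distrib)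
      finally show ?thesis .
    qed
    moreover have "s x * (2 * ?y^2) = \<bar>(h x)^2 * inverse (s x)\<bar> * 2"
      using elim by (simp add: power2_eq_square field_simps)
    ultimately show ?case by simp
  qed
  moreover have f0': "((\<lambda>x. (h x)^2 * inverse (s x)) \<longlongrightarrow> 0) at_top" using f0 by simp
  ultimately have "((\<lambda>x. s x * ln (1 + h x / s x) - h x) \<longlongrightarrow> 0) at_top"
    by (intro tendsto_0_le[OF f0'])
  hence "((\<lambda>x. (s x * ln (1 + h x / s x) - h x) + h x) \<longlongrightarrow> 0 + c) at_top"
    by (intro tendsto_add h)
  thus ?thesis by simp
qed

lemma div_aux: "l \<noteq> 0 \<Longrightarrow> (c * l + d) / l = c + d * inverse (l::real)"
  by (simp add: field_simps)

lemma lnratio_lim: fixes c :: real assumes c: "c > 0"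
  shows "((\<lambda>x. ln (exp 1 + x powr c) / ln x) \<longlongrightarrow> c) at_top"
proof -
  have lim0: "((\<lambda>x::real. x powr (-c)) \<longlongrightarrow> 0) at_top"
    using c by (intro tendsto_neg_powr filterlim_ident) auto
  have "((\<lambda>x. ln (1 + exp 1 * x powr (-c))) \<longlongrightarrow> ln (1 + exp 1 * 0)) at_top"
    by (intro tendsto_ln tendsto_add tendsto_mult tendsto_const lim0) auto
  hence "((\<lambda>x. c + ln (1 + exp 1 * x powr (-c)) * inverse (ln x)) \<longlongrightarrow> c + 0 * 0) at_top"
    by (intro tendsto_add tendsto_mult tendsto_const tendsto_inverse_0_at_top ln_at_top) auto
  moreover have "\<forall>\<^sub>F x in at_top. c + ln (1 + exp 1 * x powr (-c)) * inverse (ln x) = ln (exp 1 + x powr c) / ln x"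
    using eventually_gt_at_top[of 1]
  proof eventually_elim
    case (elim x)
    have xp: "x powr c > 0" using elim by simp
    have "exp 1 + x powr c = x powr c * (1 + exp 1 * x powr (-c))"
      using elim by (simp add: powr_minus field_simps)
    moreover have pos2: "1 + exp 1 * x powr (-c) > 0" using elim by (intro add_pos_pos) auto
    ultimately have "ln (exp 1 + x powr c) = ln (x powr c * (1 + exp 1 * x powr (-c)))" by simp
    also have "\<dots> = ln (x powr c) + ln (1 + exp 1 * x powr (-c))"
      by (subst ln_mult) (use xp pos2 in auto)
    also have "ln (x powr c) = c * ln x" using elim by (simp add: ln_powr)
    finally have L: "ln (exp 1 + x powr c) = c * ln x + ln (1 + exp 1 * x powr (-c))" .
    have lnpos: "ln x > 0" using elim by simp
    show ?case unfolding L by (rule div_aux[symmetric]) (use lnpos in simp)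
  qed
  ultimately show ?thesis using tendsto_cong by fastforce
qed

lemma frac_lim: assumes m: "m > 0"
  shows "((\<lambda>x::real. (x - 1) / (x * m + 1)) \<longlongrightarrow> 1 / m) at_top"
proof -
  have "((\<lambda>x. (1 - inverse x) / (m + inverse x)) \<longlongrightarrow> (1 - 0) / (m + 0)) at_top"
    using m by (intro tendsto_divide tendsto_diff tendsto_add tendsto_const tendsto_inverse_0_at_top filterlim_ident) auto
  moreover have "\<forall>\<^sub>F x in at_top. (1 - inverse x) / (m + inverse x) = (x - 1) / (x * m + 1)"
    using eventually_gt_at_top[of 0]
  proof eventually_elim
    case (elim x)
    have "(1 - inverse x) / (m + inverse x) = ((1 - inverse x) * x) / ((m + inverse x) * x)"
      using elim by simp
    also have "\<dots> = (x - 1) / (x * m + 1)" using elim by (simp add: algebra_simps)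
    finally show ?case .
  qed
  ultimately show ?thesis using tendsto_cong by fastforce
qed

lemma theta_lim: assumes m: "m > 0" and nn: "nn > 0"
  shows "((\<lambda>x. walk_theta nn x / (x * m + 1)) \<longlongrightarrow> (2 / real nn) * (1 / m)) at_top"
proof -
  have "((\<lambda>x. (ln (exp 1 + x powr (2 / real nn)) / ln x) * ((x - 1) / (x * m + 1))) \<longlongrightarrow> (2 / real nn) * (1 / m)) at_top"
    using nn by (intro tendsto_mult lnratio_lim frac_lim m) auto
  moreover have "\<forall>\<^sub>F x in at_top. (ln (exp 1 + x powr (2 / real nn)) / ln x) * ((x - 1) / (x * m + 1)) = walk_theta nn x / (x * m + 1)"
    using eventually_gt_at_top[of 1] by eventually_elim (simp add: walk_theta_def)
  ultimately show ?thesis using tendsto_cong by fastforce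
qed


lemma ln_split: fixes s P g :: real assumes "s > 0" "P > 0" "1 + (g/P)/s > 0"
  shows "ln (s*P + g) = ln s + ln P + ln (1 + (g/P)/s)"
proof -
  have nz: "s \<noteq> 0" "P \<noteq> 0" using assms by auto
  have "s*P + g = (s * P) * (1 + (g/P)/s)" using nz by (simp add: field_simps)
  hence "ln (s*P + g) = ln ((s * P) * (1 + (g/P)/s))" by simp
  also have "\<dots> = ln (s*P) + ln (1 + (g/P)/s)" by (subst ln_mult) (use assms in auto)
  also have "ln (s*P) = ln s + ln P" by (subst ln_mult) (use assms in auto)
  finally show ?thesis .
qed

lemma alg_aux: "(s::real) \<noteq> 0 \<Longrightarrow> (lp2 + lq2)/2 - lpq = 0 \<Longrightarrow>
  th * ((ls + lp2 + a1 + (ls + lq2 + a2))/2 - (ls + lpq + a3)) = th / s * ((s*a1 + s*a2)/2 - s*a3)"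
  by (simp add: field_simps)

lemma main_lim:
  fixes g1 g2 g3 :: "real \<Rightarrow> real"
  assumes m: "m > 0" and nn: "nn > 0" and p: "p > 0" and q: "q > 0"
   and g1: "(g1 \<longlongrightarrow> c1) at_top" and g2: "(g2 \<longlongrightarrow> c2) at_top" and g3: "(g3 \<longlongrightarrow> c3) at_top"
  shows "((\<lambda>x. walk_theta nn x * ((ln ((x*m+1) * p^2 + g1 x) + ln ((x*m+1) * q^2 + g2 x)) / 2
            - ln ((x*m+1) * (p*q) + g3 x))) \<longlongrightarrow>
          (2 / real nn) * (1/m) * ((c1/p^2 + c2/q^2)/2 - c3/(p*q))) at_top"
proof -
  define s where "s x = x*m+1" for x
  have "filterlim (\<lambda>x. 1 + x * m) at_top at_top"
    by (rule filterlim_tendsto_add_at_top[OF tendsto_const filterlim_at_top_mult_tendsto_pos[OF tendsto_const m filterlim_ident]])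
  hence s: "filterlim s at_top at_top" unfolding s_def by (simp add: add.commute)
  define h1 where "h1 x = g1 x / p^2" for x
  define h2 where "h2 x = g2 x / q^2" for x
  define h3 where "h3 x = g3 x / (p*q)" for x
  have h1: "(h1 \<longlongrightarrow> c1/p^2) at_top" unfolding h1_def by (intro tendsto_divide g1 tendsto_const) (use p in auto)
  have h2: "(h2 \<longlongrightarrow> c2/q^2) at_top" unfolding h2_def by (intro tendsto_divide g2 tendsto_const) (use q in auto)
  have h3: "(h3 \<longlongrightarrow> c3/(p*q)) at_top" unfolding h3_def by (intro tendsto_divide g3 tendsto_const) (use p q in auto)
  have lim: "((\<lambda>x. walk_theta nn x / s x * ((s x * ln (1 + h1 x / s x) + s x * ln (1 + h2 x / s x))/2
        - s x * ln (1 + h3 x / s x))) \<longlongrightarrow> (2 / real nn) * (1/m) * ((c1/p^2 + c2/q^2)/2 - c3/(p*q))) at_top"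
  proof (rule tendsto_mult)
    show "((\<lambda>x. walk_theta nn x / s x) \<longlongrightarrow> (2 / real nn) * (1/m)) at_top"
      unfolding s_def using theta_lim[OF m nn] .
    show "((\<lambda>x. (s x * ln (1 + h1 x / s x) + s x * ln (1 + h2 x / s x))/2
        - s x * ln (1 + h3 x / s x)) \<longlongrightarrow> (c1/p^2 + c2/q^2)/2 - c3/(p*q)) at_top"
      by (rule tendsto_diff[OF tendsto_divide[OF tendsto_add[OF ln_lim[OF h1 s] ln_lim[OF h2 s]] tendsto_const] ln_lim[OF h3 s]]) simp
  qed
  have ev_pos: "\<forall>\<^sub>F x in at_top. 1 + h x / s x > 0" if "(h \<longlongrightarrow> (c::real)) at_top" for h c
  proof -
    have "\<forall>\<^sub>F x in at_top. dist (h x / s x) 0 < 1/2" using tendstoD[OF hs_zero[OF that s], of "1/2"] by simp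
    hence "\<forall>\<^sub>F x in at_top. \<bar>h x / s x\<bar> < 1/2" by (simp only: dist_real_def diff_zero)
    thus ?thesis by eventually_elim (simp only: abs_less_iff, linarith)
  qed
  have ev_s: "\<forall>\<^sub>F x in at_top. s x > 0" using s by (simp add: filterlim_at_top_dense)
  have "\<forall>\<^sub>F x in at_top. walk_theta nn x / s x * ((s x * ln (1 + h1 x / s x) + s x * ln (1 + h2 x / s x))/2
        - s x * ln (1 + h3 x / s x)) = walk_theta nn x * ((ln ((x*m+1) * p^2 + g1 x) + ln ((x*m+1) * q^2 + g2 x)) / 2
            - ln ((x*m+1) * (p*q) + g3 x))"
    using ev_s ev_pos[OF h1] ev_pos[OF h2] ev_pos[OF h3]
  proof eventually_elim
    case (elim x)
    have e1: "ln (s x * p^2 + g1 x) = ln (s x) + ln (p^2) + ln (1 + h1 x / s x)"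
      unfolding h1_def by (rule ln_split) (use elim p in \<open>auto simp: h1_def\<close>)
    have e2: "ln (s x * q^2 + g2 x) = ln (s x) + ln (q^2) + ln (1 + h2 x / s x)"
      unfolding h2_def by (rule ln_split) (use elim q in \<open>auto simp: h2_def\<close>)
    have e3: "ln (s x * (p*q) + g3 x) = ln (s x) + ln (p*q) + ln (1 + h3 x / s x)"
      unfolding h3_def by (rule ln_split) (use elim p q in \<open>auto simp: h3_def\<close>)
    have lnpq: "(ln (p^2) + ln (q^2))/2 - ln (p*q) = 0" using p q by (simp add: ln_mult power2_eq_square)
    show ?case using e1 e2 e3 unfolding s_def[symmetric]
      by (simp only:) (rule alg_aux[symmetric, OF _ lnpq], use elim in simp)
  qed
  thus ?thesis using lim tendsto_cong by fastforce
qed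



lemma sum_alg1: fixes f h q :: "nat \<Rightarrow> real" shows "(\<Sum>k\<in>K. (f k - c*p*q k)*(s*q k*r + h k - q k*r)) =
   s*r*(\<Sum>k\<in>K. f k * q k) + (\<Sum>k\<in>K. f k * h k) - r*(\<Sum>k\<in>K. f k * q k)
   - c*p*(s*r*(\<Sum>k\<in>K. (q k)^2) + (\<Sum>k\<in>K. q k * h k) - r*(\<Sum>k\<in>K. (q k)^2))"
proof -
  have "(\<Sum>k\<in>K. (f k - c*p*q k)*(s*q k*r + h k - q k*r)) = (\<Sum>k\<in>K. s*r*(f k * q k) + f k * h k - r*(f k * q k)
     - c*p*(s*r*(q k)^2 + q k * h k - r*(q k)^2))"
    by (intro sum.cong refl) (simp add: algebra_simps power2_eq_square)
  also have "\<dots> = s*r*(\<Sum>k\<in>K. f k * q k) + (\<Sum>k\<in>K. f k * h k) - r*(\<Sum>k\<in>K. f k * q k)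
   - c*p*(s*r*(\<Sum>k\<in>K. (q k)^2) + (\<Sum>k\<in>K. q k * h k) - r*(\<Sum>k\<in>K. (q k)^2))"
    by (simp only: sum.distrib sum_subtractf sum_distrib_left[symmetric])
  finally show ?thesis .
qed

lemma sum_alg2: fixes f h q :: "nat \<Rightarrow> real" shows "(\<Sum>k\<in>K. (s*p*q k + h k - p*q k)*(f k - c*q k*r)) =
   s*p*(\<Sum>k\<in>K. q k * f k) + (\<Sum>k\<in>K. h k * f k) - p*(\<Sum>k\<in>K. q k * f k)
   - c*r*(s*p*(\<Sum>k\<in>K. (q k)^2) + (\<Sum>k\<in>K. h k * q k) - p*(\<Sum>k\<in>K. (q k)^2))"
proof -
  have "(\<Sum>k\<in>K. (s*p*q k + h k - p*q k)*(f k - c*q k*r)) = (\<Sum>k\<in>K. s*p*(q k * f k) + h k * f k - p*(q k * f k)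
     - c*r*(s*p*(q k)^2 + h k * q k - p*(q k)^2))"
    by (intro sum.cong refl) (simp add: algebra_simps power2_eq_square)
  also have "\<dots> = s*p*(\<Sum>k\<in>K. q k * f k) + (\<Sum>k\<in>K. h k * f k) - p*(\<Sum>k\<in>K. q k * f k)
   - c*r*(s*p*(\<Sum>k\<in>K. (q k)^2) + (\<Sum>k\<in>K. h k * q k) - p*(\<Sum>k\<in>K. (q k)^2))"
    by (simp only: sum.distrib sum_subtractf sum_distrib_left[symmetric])
  finally show ?thesis .
qed

context wg begin

lemma Nu: "i < n \<Longrightarrow> (\<Sum>k<n. Nt t $$ (i,k) * u k) = u i"
proof -
  assume i: "i < n"
  have "(\<Sum>k<n. Nt t $$ (i,k) * u k) = (\<Sum>k<n. (if i = k then 1 else 0) * u k - t * (a i k * u k) + t * mu * u i * ((u k)^2))"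
    by (intro sum.cong refl) (simp add: Nt_index i algebra_simps power2_eq_square)
  also have "\<dots> = u i - t * (\<Sum>k<n. a i k * u k) + t * mu * u i * (\<Sum>k<n. (u k)^2)"
    using i by (simp add: sum.distrib sum_subtractf sum_distrib_left delta_sum)
  finally show ?thesis using Au[OF i] u_norm by simp
qed

lemma Nt_sym: "i < n \<Longrightarrow> j < n \<Longrightarrow> Nt t $$ (i,j) = Nt t $$ (j,i)"
  by (simp add: Nt_index a_sym)

lemma uN: "j < n \<Longrightarrow> (\<Sum>k<n. u k * Nt t $$ (k,j)) = u j"
  using Nu[of j t] by (simp add: Nt_sym mult.commute)

lemma uX: assumes "det (Nt t) \<noteq> 0" "j < n" shows "(\<Sum>k<n. u k * Xt t $$ (k,j)) = u j"
proof -
  have "(\<Sum>k<n. u k * Xt t $$ (k,j)) = (\<Sum>k<n. (\<Sum>l<n. u l * Nt t $$ (l,k)) * Xt t $$ (k,j))"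
    by (intro sum.cong refl) (simp add: uN)
  also have "\<dots> = (\<Sum>k<n. \<Sum>l<n. u l * (Nt t $$ (l,k) * Xt t $$ (k,j)))"
    by (simp add: sum_distrib_right mult.assoc)
  also have "\<dots> = (\<Sum>l<n. \<Sum>k<n. u l * (Nt t $$ (l,k) * Xt t $$ (k,j)))" by (rule sum.swap)
  also have "\<dots> = (\<Sum>l<n. u l * (if l = j then 1 else 0))"
    by (intro sum.cong refl) (simp add: sum_distrib_left[symmetric] NX(1)[OF assms(1) _ assms(2)])
  also have "\<dots> = (\<Sum>l<n. (if j = l then 1 else 0) * u l)" by (intro sum.cong refl) auto
  also have "\<dots> = u j" using assms(2) by (simp add: delta_sum)
  finally show ?thesis .
qed

lemma Xu: assumes "det (Nt t) \<noteq> 0" "i < n" shows "(\<Sum>k<n. Xt t $$ (i,k) * u k) = u i"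
proof -
  have "(\<Sum>k<n. Xt t $$ (i,k) * u k) = (\<Sum>k<n. Xt t $$ (i,k) * (\<Sum>l<n. Nt t $$ (k,l) * u l))"
    by (intro sum.cong refl) (simp add: Nu)
  also have "\<dots> = (\<Sum>k<n. \<Sum>l<n. (Xt t $$ (i,k) * Nt t $$ (k,l)) * u l)"
    by (simp add: sum_distrib_left mult.assoc)
  also have "\<dots> = (\<Sum>l<n. \<Sum>k<n. (Xt t $$ (i,k) * Nt t $$ (k,l)) * u l)" by (rule sum.swap)
  also have "\<dots> = (\<Sum>l<n. (if i = l then 1 else 0) * u l)"
    by (intro sum.cong refl) (simp add: sum_distrib_right[symmetric] NX(2)[OF assms(1) assms(2)])
  also have "\<dots> = u i" using assms(2) by (simp add: delta_sum)
  finally show ?thesis .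
qed

definition ta where "ta al = inverse (mu + inverse al)"
definition Rf where "Rf al = mat n n (\<lambda>(i,j). (al*mu+1) * u i * u j + Xt (ta al) $$ (i,j) - u i * u j)"

lemma ta_s: "al > 0 \<Longrightarrow> (al*mu+1) * (1 - ta al * mu) = 1"
proof -
  assume al: "al > 0"
  have "al*mu > 0" using al mu_pos by simp
  hence d: "al*mu+1 \<noteq> 0" "1 + al*mu \<noteq> 0" by linarith+
  show ?thesis unfolding ta_def using mu_pos al d by (simp add: field_simps)
qed

lemma Rf_carrier: "Rf al \<in> carrier_mat n n" unfolding Rf_def by simp

lemma M_index: "i < n \<Longrightarrow> j < n \<Longrightarrow> (1\<^sub>m n - t \<cdot>\<^sub>m A) $$ (i,j) = Nt t $$ (i,j) - t * mu * u i * u j"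
  using A_carrier by (simp add: Nt_index algebra_simps)

lemma M_carrier: "(1\<^sub>m n - t \<cdot>\<^sub>m A) \<in> carrier_mat n n" using A_carrier by (intro minus_carrier_mat smult_carrier_mat)

lemma resolvent_inv: assumes al: "al > 0" and d: "det (Nt (ta al)) \<noteq> 0"
  shows "(1\<^sub>m n - ta al \<cdot>\<^sub>m A) * Rf al = 1\<^sub>m n" "Rf al * (1\<^sub>m n - ta al \<cdot>\<^sub>m A) = 1\<^sub>m n"
proof -
  let ?t = "ta al" and ?s = "al*mu+1"
  have s1: "?s * (1 - ?t * mu) = 1" by (rule ta_s[OF al])
  show "(1\<^sub>m n - ?t \<cdot>\<^sub>m A) * Rf al = 1\<^sub>m n"
  proof (rule eq_matI)
    fix i j assume "i < dim_row (1\<^sub>m n)" "j < dim_col (1\<^sub>m n)"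
    hence ij: "i < n" "j < n" by auto
    have "((1\<^sub>m n - ?t \<cdot>\<^sub>m A) * Rf al) $$ (i,j) = (\<Sum>k<n. (1\<^sub>m n - ?t \<cdot>\<^sub>m A) $$ (i,k) * Rf al $$ (k,j))"
      by (rule mm_index[OF M_carrier Rf_carrier ij])
    also have "\<dots> = (\<Sum>k<n. (Nt ?t $$ (i,k) - (?t * mu) * u i * u k) *
        (?s * u k * u j + Xt ?t $$ (k,j) - u k * u j))"
    proof (rule sum.cong[OF refl])
      fix k assume "k \<in> {..<n}" hence k: "k < n" by simp
      show "(1\<^sub>m n - ?t \<cdot>\<^sub>m A) $$ (i,k) * Rf al $$ (k,j) = (Nt ?t $$ (i,k) - (?t * mu) * u i * u k) *
        (?s * u k * u j + Xt ?t $$ (k,j) - u k * u j)"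
        unfolding M_index[OF ij(1) k] Rf_def index_mat[OF k ij(2)] by (simp add: mult.assoc)
    qed
    also have "\<dots> = ?s*u j*u i + (if i = j then 1 else 0) - u j*u i - ?t*mu*u i*(?s*u j*1 + u j - u j*1)"
      unfolding sum_alg1 using u_norm uX[OF d ij(2)] Nu[OF ij(1)] NX(1)[OF d ij] by simp
    also have "\<dots> = (if i = j then 1 else 0) + u i * u j * (?s * (1 - ?t * mu) - 1)"
      by (simp add: algebra_simps)
    also have "\<dots> = 1\<^sub>m n $$ (i,j)" using s1 ij by simp
    finally show "((1\<^sub>m n - ?t \<cdot>\<^sub>m A) * Rf al) $$ (i,j) = 1\<^sub>m n $$ (i,j)" .
  qed (use A_carrier in \<open>auto simp: Rf_def\<close>)
  show "Rf al * (1\<^sub>m n - ?t \<cdot>\<^sub>m A) = 1\<^sub>m n"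
  proof (rule eq_matI)
    fix i j assume "i < dim_row (1\<^sub>m n)" "j < dim_col (1\<^sub>m n)"
    hence ij: "i < n" "j < n" by auto
    have "(Rf al * (1\<^sub>m n - ?t \<cdot>\<^sub>m A)) $$ (i,j) = (\<Sum>k<n. Rf al $$ (i,k) * (1\<^sub>m n - ?t \<cdot>\<^sub>m A) $$ (k,j))"
      by (rule mm_index[OF Rf_carrier M_carrier ij])
    also have "\<dots> = (\<Sum>k<n. (?s * u i * u k + Xt ?t $$ (i,k) - u i * u k) *
        (Nt ?t $$ (k,j) - (?t * mu) * u k * u j))"
    proof (rule sum.cong[OF refl])
      fix k assume "k \<in> {..<n}" hence k: "k < n" by simp
      show "Rf al $$ (i,k) * (1\<^sub>m n - ?t \<cdot>\<^sub>m A) $$ (k,j) = (?s * u i * u k + Xt ?t $$ (i,k) - u i * u k) *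
        (Nt ?t $$ (k,j) - (?t * mu) * u k * u j)"
        unfolding M_index[OF k ij(2)] Rf_def index_mat[OF ij(1) k] by (simp add: mult.assoc)
    qed
    also have "\<dots> = ?s*u i*u j + (if i = j then 1 else 0) - u i*u j - ?t*mu*u j*(?s*u i*1 + u i - u i*1)"
      unfolding sum_alg2 using u_norm Xu[OF d ij(1)] uN[OF ij(2)] NX(2)[OF d ij] by simp
    also have "\<dots> = (if i = j then 1 else 0) + u i * u j * (?s * (1 - ?t * mu) - 1)"
      by (simp add: algebra_simps)
    also have "\<dots> = 1\<^sub>m n $$ (i,j)" using s1 ij by simp
    finally show "(Rf al * (1\<^sub>m n - ?t \<cdot>\<^sub>m A)) $$ (i,j) = 1\<^sub>m n $$ (i,j)" .
  qed (use A_carrier in \<open>auto simp: Rf_def\<close>)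
qed

lemma resolvent_eq: assumes al: "al > 0" and d: "det (Nt (ta al)) \<noteq> 0"
  shows "walk_resolvent A al = Rf al"
proof -
  have dr: "dim_row A = n" using A_carrier by simp
  let ?M = "1\<^sub>m n - ta al \<cdot>\<^sub>m A"
  have wr: "walk_resolvent A al = the (mat_inverse ?M)"
    unfolding walk_resolvent_def dr spec_rad_mu ta_def Let_def ..
  note inv = resolvent_inv[OF al d]
  have "mat_inverse ?M \<noteq> None"
  proof
    assume "mat_inverse ?M = None"
    from mat_inverse(1)[OF M_carrier this, of "()"]
    have "?M \<notin> Units (ring_mat TYPE(real) n ())" .
    moreover have "?M \<in> Units (ring_mat TYPE(real) n ())"
      unfolding Units_def using inv M_carrier Rf_carrier by (auto simp: ring_mat_simps)
    ultimately show False by simp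
  qed
  then obtain B where B: "mat_inverse ?M = Some B" by auto
  from mat_inverse(2)[OF M_carrier B] have BM: "B * ?M = 1\<^sub>m n" and Bc: "B \<in> carrier_mat n n" by auto
  have "B = B * (?M * Rf al)" using inv(1) Bc by simp
  also have "\<dots> = (B * ?M) * Rf al" by (rule assoc_mult_mat[symmetric, OF Bc M_carrier Rf_carrier])
  also have "\<dots> = Rf al" using BM left_mult_one_mat[OF Rf_carrier] by simp
  finally show ?thesis using wr B by simp
qed

end

context wg begin

lemma ta_lim: "(ta \<longlongrightarrow> t0) at_top"
proof -
  have "((\<lambda>al. inverse (mu + inverse al)) \<longlongrightarrow> inverse (mu + 0)) at_top"
    by (intro tendsto_inverse tendsto_add tendsto_const tendsto_inverse_0_at_top filterlim_ident) (use mu_pos in auto)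
  thus ?thesis unfolding ta_def[abs_def] t0_def by (simp add: divide_inverse)
qed

lemma Nt_lim: "i < n \<Longrightarrow> j < n \<Longrightarrow> ((\<lambda>al. Nt (ta al) $$ (i,j)) \<longlongrightarrow> Nt t0 $$ (i,j)) at_top"
  unfolding Nt_index by (intro tendsto_diff tendsto_const tendsto_mult ta_lim)

lemma det_lim: "((\<lambda>al. det (Nt (ta al))) \<longlongrightarrow> det (Nt t0)) at_top"
  by (rule det_tendsto[OF Nt_carrier Nt_carrier Nt_lim])

lemma ev_det: "\<forall>\<^sub>F al in at_top. det (Nt (ta al)) \<noteq> 0"
  by (rule tendsto_imp_eventually_ne[OF det_lim det_N0])

lemma Xt_index: "i < n \<Longrightarrow> j < n \<Longrightarrow> Xt t $$ (i,j) = cofactor (Nt t) j i / det (Nt t)"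
  unfolding Xt_def adj_mat_def using Nt_carrier[of t] by auto

lemma Xt_lim: "i < n \<Longrightarrow> j < n \<Longrightarrow> ((\<lambda>al. Xt (ta al) $$ (i,j)) \<longlongrightarrow> Xt t0 $$ (i,j)) at_top"
  unfolding Xt_index
  by (intro tendsto_divide cofactor_tendsto[OF Nt_carrier Nt_carrier Nt_lim] det_lim det_N0)

definition dLW where "dLW i j = (2 / real n) * (1/mu) *
   (((Xt t0 $$ (i,i) - u i * u i)/(u i)^2 + (Xt t0 $$ (j,j) - u j * u j)/(u j)^2)/2
     - (Xt t0 $$ (i,j) - u i * u j)/(u i * u j))"

lemma walk_lim: assumes ij: "i < n" "j < n"
  shows "((\<lambda>al. walk_dist A al i j) \<longlongrightarrow> dLW i j) at_top"
proof -
  have nn: "n > 0" using n2 by simp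
  have lim: "((\<lambda>x. walk_theta n x * ((ln ((x*mu+1) * (u i)^2 + (Xt (ta x) $$ (i,i) - u i * u i))
     + ln ((x*mu+1) * (u j)^2 + (Xt (ta x) $$ (j,j) - u j * u j))) / 2
            - ln ((x*mu+1) * (u i * u j) + (Xt (ta x) $$ (i,j) - u i * u j)))) \<longlongrightarrow> dLW i j) at_top"
    unfolding dLW_def
    by (rule main_lim[OF mu_pos nn u_pos[OF ij(1)] u_pos[OF ij(2)]])
       (intro tendsto_diff tendsto_const Xt_lim ij)+
  have dr: "dim_row A = n" using A_carrier by simp
  have "\<forall>\<^sub>F x in at_top. walk_theta n x * ((ln ((x*mu+1) * (u i)^2 + (Xt (ta x) $$ (i,i) - u i * u i))
     + ln ((x*mu+1) * (u j)^2 + (Xt (ta x) $$ (j,j) - u j * u j))) / 2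
            - ln ((x*mu+1) * (u i * u j) + (Xt (ta x) $$ (i,j) - u i * u j))) = walk_dist A x i j"
    using ev_det eventually_gt_at_top[of 0]
  proof eventually_elim
    case (elim x)
    have R: "walk_resolvent A x = Rf x" by (rule resolvent_eq) (use elim in auto)
    show ?case unfolding walk_dist_def Let_def R dr Rf_def using ij
      by (simp add: power2_eq_square mult.assoc add_diff_eq)
  qed
  thus ?thesis using lim tendsto_cong by fastforce
qed

abbreviation X0 where "X0 \<equiv> Xt t0"

lemma X0_sym: assumes "i < n" "j < n" shows "X0 $$ (i,j) = X0 $$ (j,i)"
proof -
  note d = det_N0
  have "X0 $$ (i,j) = (\<Sum>k<n. (if i = k then 1 else 0) * X0 $$ (k,j))" using assms by (simp add: delta_sum)
  also have "\<dots> = (\<Sum>k<n. (\<Sum>l<n. X0 $$ (l,i) * Nt t0 $$ (l,k)) * X0 $$ (k,j))"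
  proof (intro sum.cong refl)
    fix k assume "k \<in> {..<n}" hence k: "k < n" by simp
    have "(\<Sum>l<n. X0 $$ (l,i) * Nt t0 $$ (l,k)) = (\<Sum>l<n. Nt t0 $$ (k,l) * X0 $$ (l,i))"
      by (intro sum.cong refl) (simp add: Nt_sym[OF k] mult.commute)
    also have "\<dots> = (if k = i then 1 else 0)" by (rule NX(1)[OF d k assms(1)])
    finally show "(if i = k then 1 else 0) * X0 $$ (k,j) = (\<Sum>l<n. X0 $$ (l,i) * Nt t0 $$ (l,k)) * X0 $$ (k,j)"
      by auto
  qed
  also have "\<dots> = (\<Sum>k<n. \<Sum>l<n. X0 $$ (l,i) * (Nt t0 $$ (l,k) * X0 $$ (k,j)))"
    by (simp add: sum_distrib_right mult.assoc)
  also have "\<dots> = (\<Sum>l<n. \<Sum>k<n. X0 $$ (l,i) * (Nt t0 $$ (l,k) * X0 $$ (k,j)))" by (rule sum.swap)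
  also have "\<dots> = (\<Sum>l<n. X0 $$ (l,i) * (if l = j then 1 else 0))"
    by (intro sum.cong refl) (simp add: sum_distrib_left[symmetric] NX(1)[OF d _ assms(2)])
  also have "\<dots> = (\<Sum>l<n. (if j = l then 1 else 0) * X0 $$ (l,i))" by (intro sum.cong refl) auto
  also have "\<dots> = X0 $$ (j,i)" using assms by (simp add: delta_sum)
  finally show ?thesis .
qed

lemma t0mu: "t0 * mu = 1" unfolding t0_def using mu_pos by simp

lemma harm0: assumes "l < n" "c < n"
  shows "X0 $$ (l,c) - t0 * (\<Sum>m<n. a l m * X0 $$ (m,c)) = (if l = c then 1 else 0) - u l * u c"
proof -
  have "(if l = c then 1 else 0) = (\<Sum>m<n. Nt t0 $$ (l,m) * X0 $$ (m,c))" using NX(1)[OF det_N0 assms] by simp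
  also have "\<dots> = (\<Sum>m<n. (if l = m then 1 else 0) * X0 $$ (m,c) - t0 * (a l m * X0 $$ (m,c)) + (t0 * mu) * u l * (u m * X0 $$ (m,c)))"
    by (intro sum.cong refl) (simp add: Nt_index assms(1) algebra_simps)
  also have "\<dots> = X0 $$ (l,c) - t0 * (\<Sum>m<n. a l m * X0 $$ (m,c)) + (t0 * mu) * u l * (\<Sum>m<n. u m * X0 $$ (m,c))"
    using assms(1) by (simp add: sum.distrib sum_subtractf sum_distrib_left[symmetric] delta_sum)
  also have "\<dots> = X0 $$ (l,c) - t0 * (\<Sum>m<n. a l m * X0 $$ (m,c)) + u l * u c"
    using uX[OF det_N0 assms(2)] t0mu by simp
  finally show ?thesis by simp
qed

definition Gp where "Gp i j = X0 $$ (i,j) / (u i * u j)"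

lemma Gp_sym: "i < n \<Longrightarrow> j < n \<Longrightarrow> Gp i j = Gp j i"
  unfolding Gp_def by (simp add: X0_sym mult.commute)

lemma harm: assumes "l < n" "p < n" "q < n"
  shows "u l * (Gp l p - Gp l q) - t0 * (\<Sum>m<n. a l m * u m * (Gp m p - Gp m q)) =
     (if l = p then 1 / u p else 0) - (if l = q then 1 / u q else 0)"
proof -
  have up: "u p > 0" "u q > 0" "u l > 0" using u_pos assms by auto
  have e1: "u m * (Gp m p - Gp m q) = X0 $$ (m,p) / u p - X0 $$ (m,q) / u q" if "m < n" for m
    using u_pos[OF that] up unfolding Gp_def by (simp add: field_simps)
  have "(\<Sum>m<n. a l m * u m * (Gp m p - Gp m q)) = (\<Sum>m<n. a l m * X0 $$ (m,p)) / u p - (\<Sum>m<n. a l m * X0 $$ (m,q)) / u q"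
  proof -
    have "(\<Sum>m<n. a l m * u m * (Gp m p - Gp m q)) = (\<Sum>m<n. a l m * X0 $$ (m,p) / u p - a l m * X0 $$ (m,q) / u q)"
    proof (intro sum.cong refl)
      fix m assume "m \<in> {..<n}" hence m: "m < n" by simp
      have "a l m * u m * (Gp m p - Gp m q) = a l m * (u m * (Gp m p - Gp m q))" by (simp only: mult.assoc)
      also have "\<dots> = a l m * (X0 $$ (m,p) / u p - X0 $$ (m,q) / u q)" by (simp only: e1[OF m])
      also have "\<dots> = a l m * X0 $$ (m,p) / u p - a l m * X0 $$ (m,q) / u q" by (simp add: right_diff_distrib)
      finally show "a l m * u m * (Gp m p - Gp m q) = a l m * X0 $$ (m,p) / u p - a l m * X0 $$ (m,q) / u q" .
    qed
    thus ?thesis by (simp add: sum_subtractf sum_divide_distrib)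
  qed
  hence "u l * (Gp l p - Gp l q) - t0 * (\<Sum>m<n. a l m * u m * (Gp m p - Gp m q)) =
    (X0 $$ (l,p) - t0 * (\<Sum>m<n. a l m * X0 $$ (m,p))) / u p - (X0 $$ (l,q) - t0 * (\<Sum>m<n. a l m * X0 $$ (m,q))) / u q"
    using e1[OF assms(1)] by (simp add: diff_divide_distrib right_diff_distrib)
  also have "\<dots> = ((if l = p then 1 else 0) - u l * u p) / u p - ((if l = q then 1 else 0) - u l * u q) / u q"
    using harm0 assms by simp
  also have "\<dots> = (if l = p then 1 / u p else 0) - (if l = q then 1 / u q else 0)"
    using up by (simp add: diff_divide_distrib)
  finally show ?thesis .
qed


lemma max_principle:
  assumes p: "p < n" and h: "\<And>l. l < n \<Longrightarrow> u l * \<psi> l - t0 * (\<Sum>m<n. a l m * u m * \<psi> m) = R l"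
    and R: "\<And>l. l < n \<Longrightarrow> l \<noteq> p \<Longrightarrow> R l \<le> 0" and l: "l < n"
  shows "\<psi> l \<le> \<psi> p"
proof (rule ccontr)
  assume nle: "\<not> \<psi> l \<le> \<psi> p"
  define M where "M = Max (\<psi> ` {..<n})"
  have fin: "finite (\<psi> ` {..<n})" "\<psi> ` {..<n} \<noteq> {}" using n2 by (auto simp: lessThan_empty_iff)
  obtain k where k: "k < n" "\<psi> k = M" using Max_in[OF fin] unfolding M_def by auto
  have Mge: "\<psi> i \<le> M" if "i < n" for i unfolding M_def using fin that by (intro Max_ge) auto
  have pM: "\<psi> p < M" using nle Mge[OF l] by simp
  have t0p: "t0 > 0" unfolding t0_def using mu_pos by simp
  have mt: "mu * t0 = 1" using t0mu by (simp add: mult.commute)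
  have propg: "\<psi> m = M" if "(k,m) \<in> E\<^sup>*" for m
    using that
  proof (induction rule: rtrancl_induct)
    case base thus ?case using k by simp
  next
    case (step l' m)
    hence lm: "l' < n" "m < n" "a l' m > 0" unfolding E_def by auto
    have lp: "l' \<noteq> p" using step.IH pM by auto
    define D where "D = (\<Sum>q<n. a l' q * u q * (M - \<psi> q))"
    have Dnn: "\<forall>q\<in>{..<n}. a l' q * u q * (M - \<psi> q) \<ge> 0"
      using a_nonneg lm u_nonneg Mge by (auto intro!: mult_nonneg_nonneg)
    have "t0 * D = t0 * ((\<Sum>q<n. a l' q * u q) * M) - t0 * (\<Sum>q<n. a l' q * u q * \<psi> q)"
      unfolding D_def by (simp add: sum_subtractf sum_distrib_right right_diff_distrib mult.assoc)
    also have "t0 * ((\<Sum>q<n. a l' q * u q) * M) = u l' * M"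
      using Au[OF lm(1)] t0mu mt by (simp add: mult.assoc mult.left_commute)
    also have "u l' * M - t0 * (\<Sum>q<n. a l' q * u q * \<psi> q) = R l'"
      using h[OF lm(1)] step.IH by simp
    finally have "t0 * D \<le> 0" using R[OF lm(1) lp] by simp
    hence "D \<le> 0" using t0p by (simp add: mult_le_0_iff)
    moreover have "D \<ge> 0" unfolding D_def using Dnn by (intro sum_nonneg) auto
    ultimately have "D = 0" by simp
    hence "\<forall>q\<in>{..<n}. a l' q * u q * (M - \<psi> q) = 0"
      unfolding D_def using Dnn by (subst sum_nonneg_eq_0_iff[symmetric]) auto
    hence "a l' m * u m * (M - \<psi> m) = 0" using lm(2) by blast
    thus ?case using lm(3) u_pos[OF lm(2)] by simp
  qed
  have "\<psi> p = M" by (rule propg) (rule conn[OF k(1) p])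
  thus False using pM by simp
qed

lemma Gp_mp: assumes "p < n" "q < n" "l < n"
  shows "Gp l p - Gp l q \<le> Gp p p - Gp p q"
proof (rule max_principle[where \<psi>="\<lambda>m. Gp m p - Gp m q"])
  show "p < n" "l < n" using assms by auto
  fix l' assume l': "l' < n"
  show "u l' * (Gp l' p - Gp l' q) - t0 * (\<Sum>m<n. a l' m * u m * (Gp m p - Gp m q)) =
     (if l' = p then 1 / u p else 0) - (if l' = q then 1 / u q else 0)"
    by (rule harm[OF l' assms(1,2)])
  assume "l' \<noteq> p"
  thus "(if l' = p then 1 / u p else 0) - (if l' = q then 1 / u q else 0) \<le> 0"
    using u_pos[OF assms(2)] by auto
qed

lemma dLW_Gp: assumes "i < n" "j < n"
  shows "dLW i j = (1 / (real n * mu)) * (Gp i i + Gp j j - 2 * Gp i j)"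
proof -
  have up: "u i > 0" "u j > 0" using u_pos assms by auto
  have e1: "(X0 $$ (i,i) - u i * u i)/(u i)^2 = Gp i i - 1"
    and e2: "(X0 $$ (j,j) - u j * u j)/(u j)^2 = Gp j j - 1"
    and e3: "(X0 $$ (i,j) - u i * u j)/(u i * u j) = Gp i j - 1"
    unfolding Gp_def using up by (simp_all add: field_simps power2_eq_square)
  have nz: "real n \<noteq> 0" "mu \<noteq> 0" using n2 mu_pos by auto
  show ?thesis unfolding dLW_def e1 e2 e3 using nz by (simp add: field_simps)
qed

lemma dLW_metric: "metric_on {..<n} dLW"
proof -
  have K: "1 / (real n * mu) > 0" using n2 mu_pos by simp
  show ?thesis unfolding metric_on_def
  proof (intro conjI ballI impI)
    fix i assume "i \<in> {..<n}"
    thus "dLW i i = 0" by (simp add: dLW_Gp)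
  next
    fix i j assume ij: "i \<in> {..<n}" "j \<in> {..<n}"
    thus "dLW i j = dLW j i" by (simp add: dLW_Gp Gp_sym algebra_simps)
  next
    fix i j assume ij: "i \<in> {..<n}" "j \<in> {..<n}" and ne: "i \<noteq> j"
    hence i: "i < n" and j: "j < n" by auto
    have pos: "Gp i i + Gp j j - 2 * Gp i j > 0"
    proof (rule ccontr)
      assume np: "\<not> Gp i i + Gp j j - 2 * Gp i j > 0"
      define \<phi> where "\<phi> m = Gp m i - Gp m j" for m
      have le1: "\<phi> l \<le> \<phi> i" if "l < n" for l unfolding \<phi>_def by (rule Gp_mp[OF i j that])
      have le2: "\<phi> j \<le> \<phi> l" if "l < n" for l using Gp_mp[OF j i that] unfolding \<phi>_def by simp
      have "\<phi> i - \<phi> j = Gp i i + Gp j j - 2 * Gp i j" unfolding \<phi>_def using Gp_sym[OF i j] by simp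
      hence eqc: "\<phi> l = \<phi> i" if "l < n" for l using le1[OF that] le2[OF that] np le1[OF j] by linarith
      have "u i * \<phi> i - t0 * (\<Sum>m<n. a i m * u m * \<phi> m) = 1 / u i"
        using harm[OF i i j] ne unfolding \<phi>_def by simp
      moreover have "(\<Sum>m<n. a i m * u m * \<phi> m) = (\<Sum>m<n. a i m * u m) * \<phi> i"
        by (simp add: sum_distrib_right eqc)
      ultimately have "u i * \<phi> i - t0 * (mu * u i * \<phi> i) = 1 / u i" using Au[OF i] by (simp add: mult.assoc)
      moreover have "t0 * (mu * u i * \<phi> i) = (t0 * mu) * (u i * \<phi> i)" by (simp only: mult.assoc)
      ultimately have "1 / u i = 0" using t0mu by simp
      thus False using u_pos[OF i] by simp
    qed
    show "dLW i j > 0" unfolding dLW_Gp[OF i j] using K pos by simp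
  next
    fix i j k assume "i \<in> {..<n}" "j \<in> {..<n}" "k \<in> {..<n}"
    hence i: "i < n" and j: "j < n" and k: "k < n" by auto
    have m1: "Gp k j - Gp k i \<le> Gp j j - Gp j i" by (rule Gp_mp[OF j i k])
    have m2: "Gp i j - Gp i k \<le> Gp j j - Gp j k" by (rule Gp_mp[OF j k i])
    have s: "Gp i j = Gp j i" "Gp i k = Gp k i" "Gp j k = Gp k j" using Gp_sym i j k by auto
    have "Gp i i + Gp k k - 2 * Gp i k \<le> (Gp i i + Gp j j - 2 * Gp i j) + (Gp j j + Gp k k - 2 * Gp j k)"
      using m1 m2 s by linarith
    hence "(1 / (real n * mu)) * (Gp i i + Gp k k - 2 * Gp i k) \<le>
        (1 / (real n * mu)) * ((Gp i i + Gp j j - 2 * Gp i j) + (Gp j j + Gp k k - 2 * Gp j k))"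
      using K by (intro mult_left_mono) auto
    thus "dLW i k \<le> dLW i j + dLW j k" unfolding dLW_Gp[OF i j] dLW_Gp[OF j k] dLW_Gp[OF i k]
      by (simp only: distrib_left)
  qed
qed

end

theorem corollary4:
  fixes n :: nat and A :: "real mat"
  assumes "n \<ge> 2"
    and "weighted_adjacency n A"
    and "connected_graph n A"
  shows "\<exists>dLW :: nat \<Rightarrow> nat \<Rightarrow> real.
           (\<forall>i<n. \<forall>j<n. ((\<lambda>\<alpha>. walk_dist A \<alpha> i j) \<longlongrightarrow> dLW i j) at_top)
           \<and> metric_on {..<n} dLW"
proof -
  interpret wg n A using assms by unfold_locales
  show ?thesis using walk_lim dLW_metric by blast
qed



end
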